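(* In the setting below, there is a constant $C$ independent of $t\in(0,1)$ such that $\varphi_t(u)\ge\bar\phi(u)-C\,\mathrm{dist}(u,\partial U)^{1/2}$ for all $u\in U_t$.
   Context: $n\ge3$; $p_1,\dots,p_n\in\mathbb{R}^2$ are the vertices, in counterclockwise order, of a convex polygon with interior $U$; indices mod $n$. $A\ge0$ and $V(u)=A+\sum_{i=1}^n\frac{1}{2|u-p_i|}$ on $U$. Given $b_1,\dots,b_n\in\mathbb{R}$, the boundary data on $\partial U$ is the function equal to $b_i$ at $p_i$ and affine linear on each edge $[p_i,p_{i+1}]$; $\bar\phi$ is a Lipschitz function on $\overline U$ extending it. $(U_t)_{t\in(0,1)}$ is a smooth expanding one-parameter family of strictly convex smooth domains $U_t\subset U$ converging to $U$ as $t\to1$. For each $t$, $\varphi_t\in C(\overline{U_t})$ is the unique convex function with Monge–Ampère measure $\det D^2\varphi_t=V\,du_1du_2$ on $U_t$ (in the Alexandrov sense) and $\varphi_t=\bar\phi$ on $\partial U_t$. *)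

theory Defs
  imports "HOL-Analysis.Analysis"
begin

fun ck_on :: "nat \<Rightarrow> 'a::real_normed_vector set \<Rightarrow> ('a \<Rightarrow> real) \<Rightarrow> bool" where
  "ck_on 0 S f = continuous_on S f"
| "ck_on (Suc k) S f = (continuous_on S f \<and> f differentiable_on S \<and>
      (\<forall>v. ck_on k S (\<lambda>x. frechet_derivative f (at x) v)))"

definition smooth_on :: "'a::real_normed_vector set \<Rightarrow> ('a \<Rightarrow> real) \<Rightarrow> bool" where
  "smooth_on S f \<longleftrightarrow> (\<forall>k. ck_on k S f)"

definition cross2 :: "real^2 \<Rightarrow> real^2 \<Rightarrow> real" where
  "cross2 a b = a$1 * b$2 - a$2 * b$1"

text \<open>p 0, ..., p (n-1) are the vertices, in counterclockwise order, of a convex polygon: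
  every other vertex lies strictly to the left of each directed edge.\<close>
definition ccw_convex_polygon :: "nat \<Rightarrow> (nat \<Rightarrow> real^2) \<Rightarrow> bool" where
  "ccw_convex_polygon n p \<longleftrightarrow> 3 \<le> n \<and>
     (\<forall>i<n. \<forall>j<n. j \<noteq> i \<and> j \<noteq> Suc i mod n \<longrightarrow>
        cross2 (p (Suc i mod n) - p i) (p j - p i) > 0)"

definition polygon_interior :: "nat \<Rightarrow> (nat \<Rightarrow> real^2) \<Rightarrow> (real^2) set" where
  "polygon_interior n p = interior (convex hull (p ` {..<n}))"

definition potential :: "nat \<Rightarrow> (nat \<Rightarrow> real^2) \<Rightarrow> real \<Rightarrow> real^2 \<Rightarrow> real" where
  "potential n p A u = A + (\<Sum>i<n. 1 / (2 * norm (u - p i)))"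

definition extends_boundary_data :: "nat \<Rightarrow> (nat \<Rightarrow> real^2) \<Rightarrow> (nat \<Rightarrow> real) \<Rightarrow> (real^2 \<Rightarrow> real) \<Rightarrow> bool" where
  "extends_boundary_data n p b phibar \<longleftrightarrow>
     (\<forall>i<n. \<forall>s\<in>{0..1}. phibar (p i + s *\<^sub>R (p (Suc i mod n) - p i))
                          = (1 - s) * b i + s * b (Suc i mod n))"

definition strictly_convex_domain :: "(real^2) set \<Rightarrow> bool" where
  "strictly_convex_domain D \<longleftrightarrow> open D \<and> convex D \<and>
     (\<forall>x\<in>closure D. \<forall>y\<in>closure D. x \<noteq> y \<longrightarrow> open_segment x y \<subseteq> D)"

definition smooth_expanding_family :: "(real \<Rightarrow> (real^2) set) \<Rightarrow> (real^2) set \<Rightarrow> bool" where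
  "smooth_expanding_family Ut U \<longleftrightarrow>
     (\<exists>G :: real \<times> (real^2) \<Rightarrow> real.
        smooth_on ({0<..<1} \<times> UNIV) G \<and>
        (\<forall>t\<in>{0<..<1}. Ut t = {x. G (t, x) < 0}) \<and>
        (\<forall>t\<in>{0<..<1}. \<forall>x. G (t, x) = 0 \<longrightarrow>
            (\<exists>v. frechet_derivative (\<lambda>y. G (t, y)) (at x) v \<noteq> 0))) \<and>
     (\<forall>t\<in>{0<..<1}. strictly_convex_domain (Ut t) \<and> Ut t \<subseteq> U) \<and>
     (\<forall>s\<in>{0<..<1}. \<forall>t\<in>{0<..<1}. s \<le> t \<longrightarrow> Ut s \<subseteq> Ut t) \<and>
     (\<Union>t\<in>{0<..<1}. Ut t) = U"

definition subdiff :: "(real^2 \<Rightarrow> real) \<Rightarrow> (real^2) set \<Rightarrow> real^2 \<Rightarrow> (real^2) set" where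
  "subdiff phi D x = {q. \<forall>z\<in>D. phi z \<ge> phi x + q \<bullet> (z - x)}"

text \<open>Alexandrov sense: det D^2 phi = V du on D, i.e. the Monge-Ampere measure
  E \<mapsto> |subdiff phi (E)| equals the measure with density V on Borel subsets of D.\<close>
definition alexandrov_MA :: "(real^2 \<Rightarrow> real) \<Rightarrow> (real^2 \<Rightarrow> real) \<Rightarrow> (real^2) set \<Rightarrow> bool" where
  "alexandrov_MA phi V D \<longleftrightarrow>
     (\<forall>E \<in> sets borel. E \<subseteq> D \<longrightarrow>
        emeasure lebesgue (\<Union>x\<in>E. subdiff phi D x) = (\<integral>\<^sup>+ x\<in>E. ennreal (V x) \<partial>lebesgue))"

end

theory Submission
  imports Defs
begin

lemma inner2: "(a::real^2) \<bullet> b = a$1 * b$1 + a$2 * b$2"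
  by (simp add: inner_vec_def sum_2)

lemma norm2sq: "(norm (a::real^2))^2 = a$1 * a$1 + a$2 * a$2"
  by (simp add: power2_norm_eq_inner inner2)

lemma lagrange2: "((a::real^2) \<bullet> b)^2 + (cross2 a b)^2 = (norm a)^2 * (norm b)^2"
  unfolding norm2sq by (simp add: inner2 cross2_def power2_eq_square algebra_simps)

lemma cross_le_norm: "\<bar>cross2 a b\<bar> \<le> norm a * norm b"
proof -
  have "(cross2 a b)^2 \<le> (norm a)^2 * (norm b)^2" using lagrange2[of a b] zero_le_power2[of "a \<bullet> b"] by linarith
  hence "(cross2 a b)^2 \<le> (norm a * norm b)^2" by (simp add: power_mult_distrib)
  hence "\<bar>cross2 a b\<bar> \<le> \<bar>norm a * norm b\<bar>" by (simp only: abs_le_square_iff)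
  thus ?thesis by simp
qed

lemma perp_norm: assumes "(a::real^2) \<bullet> b = 0" shows "norm a * norm b = \<bar>cross2 a b\<bar>"
proof -
  have "(norm a * norm b)^2 = (cross2 a b)^2" using lagrange2[of a b] assms by (simp add: power_mult_distrib)
  thus ?thesis by (metis abs_of_nonneg norm_ge_zero zero_le_mult_iff power2_eq_iff_nonneg abs_ge_zero power2_abs)
qed

lemma cross_coll:
  assumes "(a::real^2) \<noteq> 0" "a \<bullet> w1 = 0" "a \<bullet> w2 = 0" shows "cross2 w1 w2 = 0"
proof -
  have "a$1 * cross2 w1 w2 = w2$2 * (a \<bullet> w1) - w1$2 * (a \<bullet> w2)"
    by (simp add: cross2_def inner2 algebra_simps)
  moreover have "a$2 * cross2 w1 w2 = w1$1 * (a \<bullet> w2) - w2$1 * (a \<bullet> w1)"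
    by (simp add: cross2_def inner2 algebra_simps)
  moreover have "a$1 \<noteq> 0 \<or> a$2 \<noteq> 0" using assms(1) by (auto simp: vec_eq_iff forall_2)
  ultimately show ?thesis using assms by auto
qed

lemma cross_pair:
  assumes "(a::real^2) \<noteq> 0" "a \<bullet> w = 0" "cross2 e w > 0" "cross2 w f > 0" "a \<bullet> e \<le> 0" "a \<bullet> f \<le> 0"
  shows False
proof -
  define N where "N = a \<bullet> a"
  define c where "c = cross2 a w"
  have N0: "N > 0" using assms(1) by (simp add: N_def)
  have i1: "N * cross2 e w = (a \<bullet> e) * c - (a \<bullet> w) * cross2 a e"
    by (simp add: N_def c_def cross2_def inner2 algebra_simps)
  have i2: "N * cross2 w f = - (a \<bullet> f) * c + (a \<bullet> w) * cross2 a f"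
    by (simp add: N_def c_def cross2_def inner2 algebra_simps)
  have "(N * cross2 e w) * (N * cross2 w f) > 0" using N0 assms by simp
  moreover have "(N * cross2 e w) * (N * cross2 w f) = - (((a \<bullet> e) * (a \<bullet> f)) * c^2)"
    using i1 i2 assms(2) by (simp add: power2_eq_square algebra_simps)
  moreover have "(a \<bullet> e) * (a \<bullet> f) \<ge> 0" using assms(5,6) by (simp add: mult_nonpos_nonpos)
  moreover have "((a \<bullet> e) * (a \<bullet> f)) * c^2 \<ge> 0"
    using \<open>(a \<bullet> e) * (a \<bullet> f) \<ge> 0\<close> by simp
  ultimately show False by linarith
qed

lemma cone1:
  fixes E F v :: "real^2"
  assumes c0: "cross2 F E > 0" and vE: "v \<bullet> E \<le> 0" and Fv: "cross2 F v \<ge> 0" and Ev: "cross2 E v \<ge> 0"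
  shows "cross2 F E * norm v \<le> 2 * norm F * cross2 E v"
proof -
  have id1: "cross2 F E *\<^sub>R v = cross2 F v *\<^sub>R E - cross2 E v *\<^sub>R F"
    by (simp add: vec_eq_iff forall_2 cross2_def algebra_simps)
  have id2: "cross2 F v * (E \<bullet> E) = cross2 F E * (v \<bullet> E) + cross2 E v * (F \<bullet> E)"
    by (simp add: cross2_def inner2 algebra_simps)
  have E0: "E \<noteq> 0" using c0 by (auto simp: cross2_def)
  have "cross2 F v * (norm E * norm E) \<le> cross2 E v * (norm F * norm E)"
  proof -
    have "cross2 F E * (v \<bullet> E) \<le> 0" using c0 vE by (simp add: mult_nonneg_nonpos)
    moreover have "cross2 E v * (F \<bullet> E) \<le> cross2 E v * (norm F * norm E)"
      using Ev norm_cauchy_schwarz[of F E] by (simp add: mult_left_mono)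
    ultimately show ?thesis using id2 by (simp add: power2_norm_eq_inner[symmetric] power2_eq_square)
  qed
  hence k: "cross2 F v * norm E \<le> cross2 E v * norm F" using E0
    by (simp add: mult.assoc[symmetric] mult_le_cancel_right)
  have "cross2 F E * norm v = norm (cross2 F E *\<^sub>R v)" using c0 by simp
  also have "\<dots> \<le> norm (cross2 F v *\<^sub>R E) + norm (cross2 E v *\<^sub>R F)" unfolding id1 by (rule norm_triangle_ineq4)
  also have "\<dots> = cross2 F v * norm E + cross2 E v * norm F" using Fv Ev by simp
  also have "\<dots> \<le> 2 * norm F * cross2 E v"
  proof -
    have "cross2 F v * norm E \<le> norm F * cross2 E v" using k by (simp add: mult.commute)
    moreover have "cross2 E v * norm F = norm F * cross2 E v" by simp
    ultimately show ?thesis by linarith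
  qed
  finally show ?thesis .
qed

lemma cone2:
  fixes E G v :: "real^2"
  assumes c1: "cross2 E G > 0" and vE: "v \<bullet> E \<ge> 0" and Gv: "cross2 G v \<ge> 0" and Ev: "cross2 E v \<ge> 0"
  shows "cross2 E G * norm v \<le> 2 * norm G * cross2 E v"
proof -
  have id1: "cross2 E G *\<^sub>R v = cross2 E v *\<^sub>R G - cross2 G v *\<^sub>R E"
    by (simp add: vec_eq_iff forall_2 cross2_def algebra_simps)
  have id2: "cross2 G v * (E \<bullet> E) = cross2 E v * (G \<bullet> E) - cross2 E G * (v \<bullet> E)"
    by (simp add: cross2_def inner2 algebra_simps)
  have E0: "E \<noteq> 0" using c1 by (auto simp: cross2_def)
  have "cross2 G v * (norm E * norm E) \<le> cross2 E v * (norm G * norm E)"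
  proof -
    have "cross2 E G * (v \<bullet> E) \<ge> 0" using c1 vE by simp
    moreover have "cross2 E v * (G \<bullet> E) \<le> cross2 E v * (norm G * norm E)"
      using Ev norm_cauchy_schwarz[of G E] by (simp add: mult_left_mono)
    ultimately show ?thesis using id2 by (simp add: power2_norm_eq_inner[symmetric] power2_eq_square)
  qed
  hence k: "cross2 G v * norm E \<le> cross2 E v * norm G" using E0
    by (simp add: mult.assoc[symmetric] mult_le_cancel_right)
  have "cross2 E G * norm v = norm (cross2 E G *\<^sub>R v)" using c1 by simp
  also have "\<dots> \<le> norm (cross2 E v *\<^sub>R G) + norm (cross2 G v *\<^sub>R E)" unfolding id1 by (rule norm_triangle_ineq4)
  also have "\<dots> = cross2 E v * norm G + cross2 G v * norm E" using Gv Ev by simp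
  also have "\<dots> \<le> 2 * norm G * cross2 E v"
  proof -
    have "cross2 G v * norm E \<le> norm G * cross2 E v" using k by (simp add: mult.commute)
    moreover have "cross2 E v * norm G = norm G * cross2 E v" by simp
    ultimately show ?thesis by linarith
  qed
  finally show ?thesis .
qed

lemma cross_affine: "cross2 E (z - q) = (vector [- (E$2), E$1] :: real^2) \<bullet> z - (vector [- (E$2), E$1] :: real^2) \<bullet> q"
  by (simp add: cross2_def inner2 algebra_simps)

lemma ccwD: "ccw_convex_polygon n p \<Longrightarrow> i < n \<Longrightarrow> j < n \<Longrightarrow> j \<noteq> i \<Longrightarrow> j \<noteq> Suc i mod n
  \<Longrightarrow> cross2 (p (Suc i mod n) - p i) (p j - p i) > 0"
  by (simp add: ccw_convex_polygon_def)

lemma hull_half: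
  assumes poly: "ccw_convex_polygon n p" and i: "i < n" and z: "z \<in> convex hull (p ` {..<n})"
  shows "cross2 (p (Suc i mod n) - p i) (z - p i) \<ge> 0"
proof -
  define E where "E = p (Suc i mod n) - p i"
  define r where "r = (vector [- (E$2), E$1] :: real^2)"
  have eq: "{z. 0 \<le> cross2 E (z - p i)} = {z. r \<bullet> z \<ge> r \<bullet> p i}"
    by (auto simp: cross_affine r_def)
  have cv: "convex {z. 0 \<le> cross2 E (z - p i)}" unfolding eq by (rule convex_halfspace_ge)
  have "p ` {..<n} \<subseteq> {z. 0 \<le> cross2 E (z - p i)}"
  proof
    fix x assume "x \<in> p ` {..<n}"
    then obtain j where j: "j < n" "x = p j" by auto
    show "x \<in> {z. 0 \<le> cross2 E (z - p i)}"
    proof (cases "j = i \<or> j = Suc i mod n")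
      case True thus ?thesis using j by (auto simp: E_def cross2_def)
    next
      case False thus ?thesis using ccwD[OF poly i j(1)] j(2) unfolding E_def
        by (auto intro: less_imp_le)
    qed
  qed
  hence "convex hull (p ` {..<n}) \<subseteq> {z. 0 \<le> cross2 E (z - p i)}" by (intro hull_minimal cv)
  thus ?thesis using z by (auto simp: E_def)
qed

lemma hull_eq_closure:
  assumes ne: "polygon_interior n p \<noteq> {}"
  shows "closure (polygon_interior n p) = convex hull (p ` {..<n})"
proof -
  have cpt: "compact (convex hull (p ` {..<n}))" by (intro compact_convex_hull finite_imp_compact) auto
  have "closure (polygon_interior n p) = closure (convex hull (p ` {..<n}))"
    unfolding polygon_interior_def using ne unfolding polygon_interior_def
    by (intro convex_closure_interior convex_convex_hull) auto
  also have "\<dots> = convex hull (p ` {..<n})" using cpt by (simp add: compact_imp_closed)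
  finally show ?thesis .
qed

lemma suc_mod_inj: "m < n \<Longrightarrow> m' < n \<Longrightarrow> Suc m mod n = Suc m' mod n \<Longrightarrow> m = m'"
  by (metis Suc_lessI mod_Suc mod_less nat.inject old.nat.distinct(1) zero_less_Suc)

lemma edge_of_frontier:
  assumes poly: "ccw_convex_polygon n p" and ne: "polygon_interior n p \<noteq> {}"
    and yF: "y \<in> frontier (polygon_interior n p)"
  shows "\<exists>i<n. \<exists>s. 0 \<le> s \<and> s \<le> 1 \<and> y = p i + s *\<^sub>R (p (Suc i mod n) - p i)"
proof -
  define P where "P = p ` {..<n}"
  define H where "H = convex hull P"
  define U where "U = polygon_interior n p"
  have U: "U = interior H" by (simp add: U_def H_def P_def polygon_interior_def)
  have n3: "3 \<le> n" using poly by (simp add: ccw_convex_polygon_def)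
  have clU: "closure U = H" unfolding U_def H_def P_def by (rule hull_eq_closure[OF ne])
  have "y \<in> closure U" using yF by (simp add: frontier_def U_def)
  hence yH: "y \<in> H" using clU by simp
  have yU: "y \<notin> U" using yF by (simp add: frontier_def U U_def[symmetric] interior_interior)
  obtain a b where a0: "a \<noteq> 0" and aU: "\<forall>x\<in>U. a \<bullet> x \<le> b" and ay: "\<forall>x\<in>{y}. a \<bullet> x \<ge> b"
  proof -
    have cU: "convex U" unfolding U H_def by (intro convex_interior convex_convex_hull)
    have Une: "U \<noteq> {}" using ne by (simp add: U_def)
    have dj: "U \<inter> {y} = {}" using yU by simp
    show ?thesis using separating_hyperplane_sets[OF cU convex_singleton Une _ dj] that by blast
  qed
  have aH: "\<forall>x\<in>H. a \<bullet> x \<le> b"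
  proof -
    have "closure U \<subseteq> {x. a \<bullet> x \<le> b}" using aU by (intro closure_minimal) (auto simp: closed_halfspace_le)
    thus ?thesis using clU by auto
  qed
  have aby: "a \<bullet> y = b" using aH yH ay by force
  have face: "(H \<inter> {x. a \<bullet> x = b}) face_of H"
    using aH by (intro face_of_Int_supporting_hyperplane_le) (auto simp: H_def)
  obtain S' where S'P: "S' \<subseteq> P" and S'T: "H \<inter> {x. a \<bullet> x = b} = convex hull S'"
    using face_of_convex_hull_subset[of P "H \<inter> {x. a \<bullet> x = b}"] face
    by (auto simp: H_def P_def finite_imp_compact)
  define Z where "Z = {x\<in>P. a \<bullet> x = b}"
  have "S' \<subseteq> Z" using S'P S'T hull_subset[of S' convex] unfolding Z_def by auto
  hence "convex hull S' \<subseteq> convex hull Z" by (rule hull_mono)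
  moreover have "y \<in> convex hull S'" using S'T yH aby by blast
  ultimately have yZ: "y \<in> convex hull Z" by blast
  have PH: "p m \<in> H" if "m < n" for m using that hull_subset[of P convex] by (auto simp: H_def P_def)
  have aE: "a \<bullet> (p (Suc m mod n) - p m) \<le> 0" if "m < n" "p m \<in> Z" for m
    using aH PH[of "Suc m mod n"] that n3 by (auto simp: Z_def inner_diff_right)
  have pair: "m = Suc j mod n \<or> j = Suc m mod n"
    if jm: "j < n" "m < n" "j \<noteq> m" "p j \<in> Z" "p m \<in> Z" for j m
  proof (rule ccontr)
    assume nn: "\<not> ?thesis"
    have c1: "cross2 (p (Suc j mod n) - p j) (p m - p j) > 0"
      using ccwD[OF poly jm(1) jm(2)] jm nn by auto
    have c2: "cross2 (p (Suc m mod n) - p m) (p j - p m) > 0"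
      using ccwD[OF poly jm(2) jm(1)] jm nn by auto
    have c2': "cross2 (p m - p j) (p (Suc m mod n) - p m) > 0"
      using c2 by (simp add: cross2_def algebra_simps)
    show False
      apply (rule cross_pair[OF a0 _ c1 c2' aE[OF jm(1,4)] aE[OF jm(2,5)]])
      using jm by (simp add: Z_def inner_diff_right)
  qed
  have Zsub: "Z \<subseteq> P" by (auto simp: Z_def)
  have "Z \<noteq> {}" using yZ by auto
  then obtain j where j: "j < n" "p j \<in> Z" using Zsub by (auto simp: P_def)
  have "\<exists>i<n. Z \<subseteq> {p i, p (Suc i mod n)}"
  proof (cases "p (Suc j mod n) \<in> Z")
    case True
    have "x \<in> {p j, p (Suc j mod n)}" if xZ: "x \<in> Z" for x
    proof -
      obtain m where m: "m < n" "x = p m" using xZ Zsub by (auto simp: P_def)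
      show ?thesis
      proof (rule ccontr)
        assume "x \<notin> {p j, p (Suc j mod n)}"
        hence mm: "m \<noteq> j" "m \<noteq> Suc j mod n" using m by auto
        have "cross2 (p (Suc j mod n) - p j) (p m - p j) > 0"
          using ccwD[OF poly j(1) m(1) mm] by auto
        moreover have "cross2 (p (Suc j mod n) - p j) (p m - p j) = 0"
          apply (rule cross_coll[OF a0])
          using True j m xZ by (auto simp: Z_def inner_diff_right)
        ultimately show False by simp
      qed
    qed
    thus ?thesis using j by blast
  next
    case False
    show ?thesis
    proof (cases "\<exists>m<n. p m \<in> Z \<and> m \<noteq> j")
      case True
      then obtain m where m: "m < n" "p m \<in> Z" "m \<noteq> j" by auto
      have mj: "j = Suc m mod n" using pair[OF j(1) m(1) m(3)[symmetric] j(2) m(2)] False m(2) by auto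
      have "x \<in> {p m, p (Suc m mod n)}" if xZ: "x \<in> Z" for x
      proof -
        obtain m' where m': "m' < n" "x = p m'" using xZ Zsub by (auto simp: P_def)
        show ?thesis
        proof (cases "m' = j")
          case True thus ?thesis using m' mj by auto
        next
          case ne': False
          have "m' = Suc j mod n \<or> j = Suc m' mod n" using pair[OF j(1) m'(1) ne'[symmetric] j(2)] xZ m' by auto
          moreover have "p m' \<in> Z" using xZ m'(2) by simp
          moreover have "m' \<noteq> Suc j mod n"
          proof
            assume "m' = Suc j mod n"
            thus False using False \<open>p m' \<in> Z\<close> by simp
          qed
          ultimately have jm': "j = Suc m' mod n" by blast
          have "m' = m" by (rule suc_mod_inj[OF m'(1) m(1)]) (metis jm' mj)
          thus ?thesis using m'(2) by simp
        qed
      qed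
      thus ?thesis using m by blast
    next
      case False
      have "Z \<subseteq> {p j, p (Suc j mod n)}"
      proof
        fix x assume xZ: "x \<in> Z"
        then obtain m where m: "m < n" "x = p m" using Zsub by (auto simp: P_def)
        hence "m = j" using False xZ by blast
        thus "x \<in> {p j, p (Suc j mod n)}" using m by simp
      qed
      thus ?thesis using j by blast
    qed
  qed
  then obtain i where i: "i < n" "Z \<subseteq> {p i, p (Suc i mod n)}" by auto
  have "y \<in> closed_segment (p i) (p (Suc i mod n))"
    using yZ hull_mono[OF i(2), of convex] by (auto simp: segment_convex_hull)
  then obtain s where s: "0 \<le> s" "s \<le> 1" "y = (1 - s) *\<^sub>R p i + s *\<^sub>R p (Suc i mod n)"
    by (auto simp: in_segment)
  have "y = p i + s *\<^sub>R (p (Suc i mod n) - p i)" using s(3) by (simp add: algebra_simps)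
  thus ?thesis using i s by blast
qed

lemma sucmod: "i < n \<Longrightarrow> Suc i mod n = (if Suc i = n then 0 else Suc i)"
  by (simp add: mod_Suc)

lemma predmod: fixes i n :: nat assumes "i < n" shows "(i + n - 1) mod n = (if i = 0 then n - 1 else i - 1)"
proof (cases "i = 0")
  case True
  have "n - 1 < n" using assms by (cases n) auto
  thus ?thesis using True by simp
next
  case False
  hence "i + n - 1 = (i - 1) + n" by simp
  hence "(i + n - 1) mod n = (i - 1) mod n" by simp
  thus ?thesis using False assms by simp
qed

lemma arith_tail:
  fixes phz bb L nv st s nE q K cz :: real
  assumes h1: "phz \<ge> bb - L * nv" and h2: "st \<le> \<bar>s\<bar> * nv / nE" and h3: "nv \<le> q * cz"
    and h4: "(L + \<bar>s\<bar> / nE) * q \<le> K" and L0: "L \<ge> 0" and nE: "nE > 0" and cz: "cz \<ge> 0"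
  shows "phz \<ge> bb + st - K * cz"
proof -
  have a0: "L + \<bar>s\<bar> / nE \<ge> 0" using L0 nE by simp
  have "(L + \<bar>s\<bar> / nE) * nv \<le> (L + \<bar>s\<bar> / nE) * (q * cz)" using h3 a0 by (rule mult_left_mono)
  also have "\<dots> = ((L + \<bar>s\<bar> / nE) * q) * cz" by simp
  also have "\<dots> \<le> K * cz" using h4 cz by (rule mult_right_mono)
  finally have k: "(L + \<bar>s\<bar> / nE) * nv \<le> K * cz" .
  have "\<bar>s\<bar> * nv / nE = (\<bar>s\<bar> / nE) * nv" by simp
  hence "st \<le> (\<bar>s\<bar> / nE) * nv" using h2 by simp
  moreover have "(L + \<bar>s\<bar> / nE) * nv = L * nv + (\<bar>s\<bar> / nE) * nv" by (simp add: distrib_right)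
  ultimately show ?thesis using h1 k by linarith
qed

lemma st_bound:
  fixes s nE :: real and x E :: "real^2"
  assumes nE: "nE = norm E" "nE > 0"
  shows "s * ((x \<bullet> E) / (E \<bullet> E)) \<le> \<bar>s\<bar> * norm x / nE"
proof -
  have EE: "E \<bullet> E = nE * nE" using assms by (simp add: power2_norm_eq_inner[symmetric] power2_eq_square)
  have "\<bar>x \<bullet> E\<bar> \<le> norm x * nE" using Cauchy_Schwarz_ineq2[of x E] nE by simp
  hence cs: "\<bar>x \<bullet> E\<bar> / (nE * nE) \<le> (norm x * nE) / (nE * nE)" using nE
    by (intro divide_right_mono) auto
  have t: "\<bar>(x \<bullet> E) / (E \<bullet> E)\<bar> \<le> norm x / nE"
  proof -
    have "\<bar>(x \<bullet> E) / (E \<bullet> E)\<bar> = \<bar>x \<bullet> E\<bar> / (nE * nE)" using EE by (simp add: abs_div)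
    also have "\<dots> \<le> (norm x * nE) / (nE * nE)" by (rule cs)
    also have "\<dots> = norm x / nE" using nE by simp
    finally show ?thesis .
  qed
  have "s * ((x \<bullet> E) / (E \<bullet> E)) \<le> \<bar>s * ((x \<bullet> E) / (E \<bullet> E))\<bar>" by (rule abs_ge_self)
  also have "\<dots> = \<bar>s\<bar> * \<bar>(x \<bullet> E) / (E \<bullet> E)\<bar>" by (simp add: abs_mult)
  also have "\<dots> \<le> \<bar>s\<bar> * (norm x / nE)" by (rule mult_left_mono[OF t abs_ge_zero])
  finally show ?thesis by simp
qed

lemma edge_lower:
  fixes phibar :: "real^2 \<Rightarrow> real"
  assumes poly: "ccw_convex_polygon n p" and ne: "polygon_interior n p \<noteq> {}"
    and bdry: "extends_boundary_data n p b phibar"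
    and lipL: "L-lipschitz_on (closure (polygon_interior n p)) phibar" and i: "i < n"
  shows "\<exists>K\<ge>0. \<forall>z\<in>convex hull (p ` {..<n}).
     phibar z \<ge> b i + (b (Suc i mod n) - b i) * (((z - p i) \<bullet> (p (Suc i mod n) - p i)) / ((p (Suc i mod n) - p i) \<bullet> (p (Suc i mod n) - p i)))
        - K * cross2 (p (Suc i mod n) - p i) (z - p i)"
proof -
  define H where "H = convex hull (p ` {..<n})"
  have n3: "3 \<le> n" using poly by (simp add: ccw_convex_polygon_def)
  define i' where "i' = Suc i mod n"
  define im where "im = (i + n - 1) mod n"
  define ip where "ip = Suc i' mod n"
  have i'n: "i' < n" and imn: "im < n" and ipn: "ip < n" using i n3 by (auto simp: i'_def im_def ip_def)
  have imv: "im = (if i = 0 then n - 1 else i - 1)" using predmod[OF i] by (simp add: im_def)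
  have im_suc: "Suc im mod n = i"
  proof (cases "i = 0")
    case True thus ?thesis using imv n3 by simp
  next
    case False thus ?thesis using imv i by simp
  qed
  have i'_ne_i: "i' \<noteq> i" using i n3 by (auto simp: i'_def sucmod)
  have i'_ne_im: "i' \<noteq> im" using i n3 imv by (auto simp: i'_def sucmod)
  have ip_ne_i: "ip \<noteq> i" using i n3 by (auto simp: ip_def i'_def sucmod)
  have ip_ne_i': "ip \<noteq> i'" using i'n n3 by (auto simp: ip_def sucmod)
  define E where "E = p i' - p i"
  define F where "F = p i - p im"
  define G where "G = p ip - p i'"
  define s where "s = b i' - b i"
  have c0: "cross2 F E > 0"
  proof -
    have "cross2 (p (Suc im mod n) - p im) (p i' - p im) > 0"
      using ccwD[OF poly imn i'n i'_ne_im] i'_ne_i im_suc by auto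
    hence "cross2 F (E + F) > 0" using im_suc by (simp add: F_def E_def)
    thus ?thesis by (simp add: cross2_def algebra_simps)
  qed
  have c1: "cross2 E G > 0"
  proof -
    have "cross2 (p (Suc i mod n) - p i) (p ip - p i) > 0"
      using ccwD[OF poly i ipn ip_ne_i] ip_ne_i' by (auto simp: i'_def)
    hence "cross2 E (G + E) > 0" by (simp add: E_def G_def i'_def)
    thus ?thesis by (simp add: cross2_def algebra_simps)
  qed
  have E0: "E \<noteq> 0" using c1 by (auto simp: cross2_def)
  define nE where "nE = norm E"
  have nE0: "nE > 0" using E0 by (simp add: nE_def)
  have EEpos: "E \<bullet> E > 0" using E0 by simp
  have L0: "L \<ge> 0" using lipL by (simp add: lipschitz_on_def)
  have clU: "closure (polygon_interior n p) = H" unfolding H_def by (rule hull_eq_closure[OF ne])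
  have lip: "phibar x \<ge> phibar y - L * norm (x - y)" if "x \<in> H" "y \<in> H" for x y
  proof -
    have "dist (phibar y) (phibar x) \<le> L * dist y x" using lipL that clU by (auto simp: lipschitz_on_def)
    thus ?thesis by (simp add: dist_real_def dist_norm norm_minus_commute abs_le_iff)
  qed
  have edge: "phibar (p i + t *\<^sub>R E) = (1 - t) * b i + t * b i'" if "0 \<le> t" "t \<le> 1" for t
    using bdry i that unfolding extends_boundary_data_def E_def i'_def by auto
  have pi_val: "phibar (p i) = b i" using edge[of 0] by simp
  have pi'_val: "phibar (p i') = b i'" using edge[of 1] by (simp add: E_def)
  have PH: "p m \<in> H" if "m < n" for m using that hull_subset[of "p ` {..<n}" convex] by (auto simp: H_def)
  define qF where "qF = 2 * norm F / cross2 F E"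
  define qG where "qG = 2 * norm G / cross2 E G"
  have qF0: "qF \<ge> 0" and qG0: "qG \<ge> 0" using c0 c1 by (auto simp: qF_def qG_def)
  define K where "K = L / nE + (L + \<bar>s\<bar> / nE) * (qF + qG)"
  have a0: "L + \<bar>s\<bar> / nE \<ge> 0" using L0 nE0 by simp
  have K1: "L / nE \<le> K" unfolding K_def using a0 qF0 qG0 by simp
  have KF: "(L + \<bar>s\<bar> / nE) * qF \<le> K"
  proof -
    have "(L + \<bar>s\<bar> / nE) * qF \<le> (L + \<bar>s\<bar> / nE) * (qF + qG)" using a0 qG0 by (simp add: mult_left_mono)
    thus ?thesis unfolding K_def using L0 nE0 by (smt (verit) divide_nonneg_pos)
  qed
  have KG: "(L + \<bar>s\<bar> / nE) * qG \<le> K"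
  proof -
    have "(L + \<bar>s\<bar> / nE) * qG \<le> (L + \<bar>s\<bar> / nE) * (qF + qG)" using a0 qF0 by (simp add: mult_left_mono)
    thus ?thesis unfolding K_def using L0 nE0 by (smt (verit) divide_nonneg_pos)
  qed
  have K0: "K \<ge> 0" using K1 L0 nE0 by (smt (verit) divide_nonneg_pos)
  have main: "phibar z \<ge> b i + s * (((z - p i) \<bullet> E) / (E \<bullet> E)) - K * cross2 E (z - p i)" if zH: "z \<in> H" for z
  proof -
    define cz where "cz = cross2 E (z - p i)"
    have cz0: "cz \<ge> 0" using hull_half[OF poly i, of z] zH by (simp add: cz_def E_def i'_def H_def)
    define t where "t = ((z - p i) \<bullet> E) / (E \<bullet> E)"
    consider (neg) "t < 0" | (mid) "0 \<le> t \<and> t \<le> 1" | (pos) "t > 1" by linarith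
    hence "phibar z \<ge> b i + s * t - K * cz"
    proof cases
      case mid
      define w where "w = p i + t *\<^sub>R E"
      have "w \<in> closed_segment (p i) (p i')"
        unfolding in_segment using mid by (intro exI[of _ t]) (simp add: w_def E_def algebra_simps)
      hence wH: "w \<in> H" using closed_segment_subset[OF PH[OF i] PH[OF i'n]] by (auto simp: H_def)
      have wv: "phibar w = b i + s * t" using edge[of t] mid by (simp add: w_def s_def algebra_simps)
      have perp: "E \<bullet> (z - w) = 0"
      proof -
        have "E \<bullet> (z - w) = (z - p i) \<bullet> E - t * (E \<bullet> E)" by (simp add: w_def inner_diff_right inner_add_right inner_commute)
        also have "\<dots> = 0" using EEpos by (simp add: t_def)
        finally show ?thesis .
      qed
      have crw: "cross2 E (z - w) = cz" by (simp add: w_def cz_def cross2_def algebra_simps)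
      have "nE * norm (z - w) = cz" using perp_norm[OF perp] crw cz0 by (simp add: nE_def)
      hence nzw: "norm (z - w) = cz / nE" using nE0 by (simp add: field_simps)
      have "phibar z \<ge> phibar w - L * norm (z - w)" by (rule lip[OF zH wH])
      hence "phibar z \<ge> b i + s * t - (L / nE) * cz" using wv nzw by simp
      moreover have "(L / nE) * cz \<le> K * cz" using K1 cz0 by (rule mult_right_mono)
      ultimately show ?thesis by linarith
    next
      case neg
      define v where "v = z - p i"
      have vE: "v \<bullet> E \<le> 0" using neg EEpos by (simp add: t_def v_def divide_less_0_iff)
      have Fv: "cross2 F v \<ge> 0"
      proof -
        have "0 \<le> cross2 (p (Suc im mod n) - p im) (z - p im)" using hull_half[OF poly imn, of z] zH by (simp add: H_def)
        hence "0 \<le> cross2 F (v + F)" using im_suc by (simp add: F_def v_def)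
        thus ?thesis by (simp add: cross2_def algebra_simps)
      qed
      have Ev: "cross2 E v \<ge> 0" using cz0 by (simp add: cz_def v_def)
      have "cross2 F E * norm v \<le> 2 * norm F * cross2 E v" by (rule cone1[OF c0 vE Fv Ev])
      hence nv: "norm v \<le> qF * cz" using c0 by (simp add: qF_def cz_def v_def field_simps)
      have h1: "phibar z \<ge> b i - L * norm v" using lip[OF zH PH[OF i]] pi_val by (simp add: v_def)
      have h2: "s * t \<le> \<bar>s\<bar> * norm v / nE" unfolding t_def v_def[symmetric] by (rule st_bound) (use nE0 E0 in \<open>auto simp: nE_def\<close>)
      show ?thesis by (rule arith_tail[OF h1 h2 nv KF L0 nE0 cz0])
    next
      case pos
      define v where "v = z - p i'"
      have zv: "z - p i = v + E" by (simp add: v_def E_def)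
      have vE0: "v \<bullet> E = (z - p i) \<bullet> E - E \<bullet> E" by (simp add: zv inner_add_left)
      have "(z - p i) \<bullet> E > E \<bullet> E" using pos EEpos by (simp add: t_def field_simps)
      hence vE: "v \<bullet> E \<ge> 0" using vE0 by simp
      have Gv: "cross2 G v \<ge> 0" using hull_half[OF poly i'n, of z] zH by (simp add: H_def G_def v_def ip_def)
      have Ev: "cross2 E v = cz" by (simp add: cz_def zv cross2_def algebra_simps)
      have "cross2 E G * norm v \<le> 2 * norm G * cross2 E v" by (rule cone2[OF c1 vE Gv]) (simp add: Ev cz0)
      hence nv: "norm v \<le> qG * cz" using c1 by (simp add: qG_def Ev field_simps)
      have h1: "phibar z \<ge> b i' - L * norm v" using lip[OF zH PH[OF i'n]] pi'_val by (simp add: v_def)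
      have tt: "t - 1 = (v \<bullet> E) / (E \<bullet> E)" using EEpos by (simp add: t_def vE0 field_simps)
      have h2: "s * (t - 1) \<le> \<bar>s\<bar> * norm v / nE" unfolding tt by (rule st_bound) (use nE0 E0 in \<open>auto simp: nE_def\<close>)
      have "phibar z \<ge> b i' + s * (t - 1) - K * cz" by (rule arith_tail[OF h1 h2 nv KG L0 nE0 cz0])
      moreover have "b i' + s * (t - 1) = b i + s * t" by (simp add: s_def algebra_simps)
      ultimately show ?thesis by simp
    qed
    thus ?thesis by (simp only: t_def cz_def)
  qed
  show ?thesis
    unfolding i'_def[symmetric] E_def[symmetric] s_def[symmetric] H_def[symmetric]
    using K0 main by blast
qed

definition edge_aff :: "nat \<Rightarrow> (nat \<Rightarrow> real^2) \<Rightarrow> (nat \<Rightarrow> real) \<Rightarrow> nat \<Rightarrow> real^2 \<Rightarrow> real" where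
  "edge_aff n p b i z = b i + (b (Suc i mod n) - b i) * (((z - p i) \<bullet> (p (Suc i mod n) - p i)) / ((p (Suc i mod n) - p i) \<bullet> (p (Suc i mod n) - p i)))"

definition edge_cr :: "nat \<Rightarrow> (nat \<Rightarrow> real^2) \<Rightarrow> nat \<Rightarrow> real^2 \<Rightarrow> real" where
  "edge_cr n p i z = cross2 (p (Suc i mod n) - p i) (z - p i)"

lemma uniform_edges:
  fixes phibar :: "real^2 \<Rightarrow> real"
  assumes poly: "ccw_convex_polygon n p" and ne: "polygon_interior n p \<noteq> {}"
    and bdry: "extends_boundary_data n p b phibar"
    and lipL: "L-lipschitz_on (closure (polygon_interior n p)) phibar"
  shows "\<exists>K\<ge>0. \<forall>i<n. \<forall>z\<in>convex hull (p ` {..<n}). phibar z \<ge> edge_aff n p b i z - K * edge_cr n p i z"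
proof -
  have "\<forall>i. \<exists>K. i < n \<longrightarrow> K \<ge> 0 \<and> (\<forall>z\<in>convex hull (p ` {..<n}). phibar z \<ge> edge_aff n p b i z - K * edge_cr n p i z)"
  proof
    fix i
    show "\<exists>K. i < n \<longrightarrow> K \<ge> 0 \<and> (\<forall>z\<in>convex hull (p ` {..<n}). phibar z \<ge> edge_aff n p b i z - K * edge_cr n p i z)"
    proof (cases "i < n")
      case True
      from edge_lower[OF poly ne bdry lipL True] obtain K where
        "K \<ge> 0" "\<forall>z\<in>convex hull (p ` {..<n}). phibar z \<ge> edge_aff n p b i z - K * edge_cr n p i z"
        unfolding edge_aff_def edge_cr_def by blast
      thus ?thesis by blast
    qed simp
  qed
  then obtain Kf where Kf: "\<And>i. i < n \<Longrightarrow> Kf i \<ge> 0 \<and> (\<forall>z\<in>convex hull (p ` {..<n}). phibar z \<ge> edge_aff n p b i z - Kf i * edge_cr n p i z)"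
    by metis
  define K where "K = (\<Sum>i<n. Kf i)"
  have K0: "K \<ge> 0" unfolding K_def using Kf by (intro sum_nonneg) auto
  have "phibar z \<ge> edge_aff n p b i z - K * edge_cr n p i z" if i: "i < n" and z: "z \<in> convex hull (p ` {..<n})" for i z
  proof -
    have "Kf i \<le> K" unfolding K_def using Kf i by (intro member_le_sum) auto
    moreover have "edge_cr n p i z \<ge> 0" unfolding edge_cr_def by (rule hull_half[OF poly i z])
    ultimately have "Kf i * edge_cr n p i z \<le> K * edge_cr n p i z" by (rule mult_right_mono)
    thus ?thesis using Kf[OF i] z by force
  qed
  thus ?thesis using K0 by blast
qed

lemma edge_nonzero:
  assumes poly: "ccw_convex_polygon n p" and i: "i < n"
  shows "p (Suc i mod n) - p i \<noteq> 0"
proof -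
  have n3: "3 \<le> n" using poly by (simp add: ccw_convex_polygon_def)
  define i' where "i' = Suc i mod n"
  define ip where "ip = Suc i' mod n"
  have i'n: "i' < n" and ipn: "ip < n" using i n3 by (auto simp: i'_def ip_def)
  have ip_ne_i: "ip \<noteq> i" using i n3 by (auto simp: ip_def i'_def sucmod)
  have ip_ne_i': "ip \<noteq> i'" using i'n n3 by (auto simp: ip_def sucmod)
  have "cross2 (p (Suc i mod n) - p i) (p ip - p i) > 0"
    using ccwD[OF poly i ipn ip_ne_i] ip_ne_i' by (auto simp: i'_def)
  thus ?thesis by (auto simp: cross2_def)
qed

lemma edge_aff_affine: "\<exists>g c. \<forall>z. c + g \<bullet> z = edge_aff n p b i z - K * edge_cr n p i z"
proof -
  define E where "E = p (Suc i mod n) - p i"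
  define s where "s = b (Suc i mod n) - b i"
  define r where "r = (vector [- (E$2), E$1] :: real^2)"
  define g where "g = (s / (E \<bullet> E)) *\<^sub>R E - K *\<^sub>R r"
  define c where "c = b i - s * ((p i \<bullet> E) / (E \<bullet> E)) + K * (r \<bullet> p i)"
  have "c + g \<bullet> z = edge_aff n p b i z - K * edge_cr n p i z" for z
  proof -
    have cr: "edge_cr n p i z = r \<bullet> z - r \<bullet> p i" unfolding edge_cr_def E_def[symmetric] r_def by (rule cross_affine)
    have ea: "edge_aff n p b i z = b i + s * ((z \<bullet> E - p i \<bullet> E) / (E \<bullet> E))"
      unfolding edge_aff_def E_def[symmetric] s_def[symmetric] by (simp add: inner_diff_left)
    show ?thesis unfolding cr ea g_def c_def
      by (simp add: inner_diff_left inner_commute diff_divide_distrib algebra_simps)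
  qed
  thus ?thesis by blast
qed

lemma minorant:
  fixes phibar :: "real^2 \<Rightarrow> real"
  assumes poly: "ccw_convex_polygon n p" and ne: "polygon_interior n p \<noteq> {}"
    and bdry: "extends_boundary_data n p b phibar"
    and lipL: "L-lipschitz_on (closure (polygon_interior n p)) phibar"
  shows "\<exists>K\<ge>0. \<forall>u\<in>polygon_interior n p. \<forall>y\<in>frontier (polygon_interior n p). \<exists>g c.
           (\<forall>z\<in>closure (polygon_interior n p). c + g \<bullet> z \<le> phibar z) \<and> phibar u - K * norm (u - y) \<le> c + g \<bullet> u"
proof -
  define U where "U = polygon_interior n p"
  define H where "H = convex hull (p ` {..<n})"
  have clU: "closure U = H" unfolding U_def H_def by (rule hull_eq_closure[OF ne])
  obtain K0 where K0: "K0 \<ge> 0" and K0b: "\<forall>i<n. \<forall>z\<in>H. phibar z \<ge> edge_aff n p b i z - K0 * edge_cr n p i z"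
    using uniform_edges[OF poly ne bdry lipL] unfolding H_def by blast
  have L0: "L \<ge> 0" using lipL by (simp add: lipschitz_on_def)
  have lip: "phibar x \<ge> phibar y - L * norm (x - y)" if "x \<in> H" "y \<in> H" for x y
  proof -
    have "dist (phibar y) (phibar x) \<le> L * dist y x" using lipL that clU by (auto simp: lipschitz_on_def U_def)
    thus ?thesis by (simp add: dist_real_def dist_norm norm_minus_commute abs_le_iff)
  qed
  define kk where "kk i = \<bar>b (Suc i mod n) - b i\<bar> / norm (p (Suc i mod n) - p i) + K0 * norm (p (Suc i mod n) - p i)" for i
  have kk0: "kk i \<ge> 0" for i unfolding kk_def using K0 by simp
  define K where "K = L + (\<Sum>i<n. kk i)"
  have Kge: "L + kk i \<le> K" if "i < n" for i
    unfolding K_def using that kk0 by (simp add: member_le_sum)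
  have K0': "K \<ge> 0" unfolding K_def using L0 kk0 by (simp add: sum_nonneg)
  have "\<exists>g c. (\<forall>z\<in>closure U. c + g \<bullet> z \<le> phibar z) \<and> phibar u - K * norm (u - y) \<le> c + g \<bullet> u"
    if uU: "u \<in> U" and yF: "y \<in> frontier U" for u y
  proof -
    obtain i sy where i: "i < n" and sy: "0 \<le> sy" "sy \<le> 1" and yv: "y = p i + sy *\<^sub>R (p (Suc i mod n) - p i)"
      using edge_of_frontier[OF poly ne] yF unfolding U_def by blast
    define E where "E = p (Suc i mod n) - p i"
    define s where "s = b (Suc i mod n) - b i"
    define nE where "nE = norm E"
    have E0: "E \<noteq> 0" unfolding E_def by (rule edge_nonzero[OF poly i])
    have nE0: "nE > 0" using E0 by (simp add: nE_def)
    have EEpos: "E \<bullet> E > 0" using E0 by simp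
    obtain g c where gc: "\<forall>z. c + g \<bullet> z = edge_aff n p b i z - K0 * edge_cr n p i z"
      using edge_aff_affine by blast
    have uH: "u \<in> H" using uU clU closure_subset by blast
    have yH: "y \<in> H" using yF clU by (simp add: frontier_def)
    have below: "\<forall>z\<in>closure U. c + g \<bullet> z \<le> phibar z" using gc K0b i clU by simp
    have yval: "phibar y = b i + s * sy"
      using bdry i sy unfolding extends_boundary_data_def yv s_def by (simp add: algebra_simps)
    have ay: "edge_aff n p b i y = b i + s * sy"
    proof -
      have "(y - p i) \<bullet> E = sy * (E \<bullet> E)" by (simp add: yv E_def)
      thus ?thesis unfolding edge_aff_def E_def[symmetric] s_def[symmetric] using EEpos by simp
    qed
    have diffa: "edge_aff n p b i y - edge_aff n p b i u \<le> \<bar>s\<bar> * norm (y - u) / nE"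
    proof -
      have "edge_aff n p b i y - edge_aff n p b i u = s * (((y - u) \<bullet> E) / (E \<bullet> E))"
        unfolding edge_aff_def E_def[symmetric] s_def[symmetric]
        by (simp add: inner_diff_left diff_divide_distrib algebra_simps)
      also have "\<dots> \<le> \<bar>s\<bar> * norm (y - u) / nE" by (rule st_bound) (use nE0 in \<open>auto simp: nE_def\<close>)
      finally show ?thesis .
    qed
    have cru: "edge_cr n p i u \<le> nE * norm (u - y)"
    proof -
      have "edge_cr n p i u = cross2 E (u - y)" unfolding edge_cr_def E_def[symmetric]
        by (simp add: yv E_def[symmetric] cross2_def algebra_simps)
      also have "\<dots> \<le> \<bar>cross2 E (u - y)\<bar>" by (rule abs_ge_self)
      also have "\<dots> \<le> nE * norm (u - y)" unfolding nE_def by (rule cross_le_norm)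
      finally show ?thesis .
    qed
    have "phibar y \<ge> phibar u - L * norm (u - y)" using lip[OF yH uH] by (simp add: norm_minus_commute)
    have nyu: "norm (y - u) = norm (u - y)" by (rule norm_minus_commute)
    have "c + g \<bullet> u = edge_aff n p b i u - K0 * edge_cr n p i u" using gc by simp
    also have "\<dots> \<ge> edge_aff n p b i u - K0 * (nE * norm (u - y))"
      using cru K0 by (simp add: mult_left_mono)
    finally have s1: "c + g \<bullet> u \<ge> edge_aff n p b i u - K0 * (nE * norm (u - y))" .
    have s2: "edge_aff n p b i u \<ge> phibar y - \<bar>s\<bar> / nE * norm (u - y)"
      using diffa ay yval nyu by (simp add: field_simps)
    have s3: "phibar y \<ge> phibar u - L * norm (u - y)" by fact
    have "(L + kk i) * norm (u - y) \<le> K * norm (u - y)" using Kge[OF i] by (simp add: mult_right_mono)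
    moreover have "(L + kk i) * norm (u - y) = L * norm (u - y) + \<bar>s\<bar> / nE * norm (u - y) + K0 * (nE * norm (u - y))"
      by (simp add: kk_def s_def nE_def E_def algebra_simps)
    ultimately have "phibar u - K * norm (u - y) \<le> c + g \<bullet> u" using s1 s2 s3 by linarith
    thus ?thesis using below by blast
  qed
  thus ?thesis using K0' unfolding U_def by blast
qed

lemma inv_norm_integrable_ball:
  fixes c :: "real^2" and R :: real
  assumes R: "R > 0"
  shows "(\<integral>\<^sup>+x. ennreal (1 / norm (x - c)) * indicator (cball c R) x \<partial>lborel) < \<infinity>"
proof -
  define B where "B = unit_ball_vol (real DIM(real^2))"
  have B0: "B \<ge> 0" unfolding B_def by simp
  define f where "f k x = ennreal (2^(k+1) / R) * indicator (cball c (R / 2^k)) x" for k :: nat and x :: "real^2"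
  have pt: "ennreal (1 / norm (x - c)) * indicator (cball c R) x \<le> (\<Sum>k. f k x)" for x
  proof (cases "x \<in> cball c R \<and> x \<noteq> c")
    case False
    then show ?thesis by (auto simp: indicator_def)
  next
    case True
    define r where "r = norm (x - c)"
    have r0: "r > 0" and rR: "r \<le> R" using True by (auto simp: r_def dist_norm norm_minus_commute)
    define m where "m = nat \<lfloor>log 2 (R / r)\<rfloor>"
    have lg0: "log 2 (R / r) \<ge> 0" using r0 rR by simp
    have m1: "real m \<le> log 2 (R / r)" using lg0 unfolding m_def by linarith
    have m2: "log 2 (R / r) < real m + 1" using lg0 unfolding m_def by linarith
    have "2 powr real m \<le> 2 powr (log 2 (R / r))" using m1 by (intro powr_mono) auto
    hence "2 powr real m \<le> R / r" using r0 R by simp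
    hence a: "2 ^ m \<le> R / r" by (simp add: powr_realpow)
    have "2 powr (log 2 (R / r)) < 2 powr (real m + 1)" using m2 by (intro powr_less_mono) auto
    hence "R / r < 2 powr (real m + 1)" using r0 R by simp
    hence b: "R / r < 2 ^ (m+1)" by (simp add: powr_realpow[symmetric] powr_add)
    have in_ball: "x \<in> cball c (R / 2^m)"
    proof -
      have "dist c x = r" by (simp add: r_def dist_norm norm_minus_commute)
      thus ?thesis using a r0 by (simp add: field_simps)
    qed
    have "1 / r \<le> 2^(m+1) / R" using b r0 R by (simp add: field_simps)
    hence "ennreal (1 / norm (x - c)) * indicator (cball c R) x \<le> f m x"
      using True in_ball by (simp add: f_def r_def ennreal_leI)
    also have "f m x \<le> (\<Sum>k. f k x)"
      using sum_le_suminf[of "\<lambda>k. f k x" "{m}"] by (simp add: summableI)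
    finally show ?thesis .
  qed
  have "(\<integral>\<^sup>+x. ennreal (1 / norm (x - c)) * indicator (cball c R) x \<partial>lborel) \<le> (\<integral>\<^sup>+x. (\<Sum>k. f k x) \<partial>lborel)"
    by (intro nn_integral_mono pt)
  also have "\<dots> = (\<Sum>k. integral\<^sup>N lborel (f k))"
  proof (rule nn_integral_suminf)
    fix k
    have [measurable]: "cball c r \<in> sets borel" for r by simp
    show "f k \<in> borel_measurable lborel" unfolding f_def by measurable
  qed
  also have "\<dots> = (\<Sum>k. ennreal (2 * B * R * (1/2)^k))"
  proof (rule suminf_cong)
    fix k
    have "integral\<^sup>N lborel (f k) = ennreal (2^(k+1) / R) * emeasure lborel (cball c (R / 2^k))"
      unfolding f_def by (simp add: nn_integral_cmult_indicator)
    also have "\<dots> = ennreal (2^(k+1) / R) * ennreal (B * (R / 2^k) ^ 2)"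
      using R by (subst emeasure_cball) (auto simp: B_def)
    also have "\<dots> = ennreal (2^(k+1) / R * (B * (R / 2^k) ^ 2))"
      using R B0 by (subst ennreal_mult) auto
    also have "2^(k+1) / R * (B * (R / 2^k) ^ 2) = 2 * B * R * (1/2)^k"
      using R by (simp add: field_simps power2_eq_square power_mult_distrib power_one_over)
    finally show "integral\<^sup>N lborel (f k) = ennreal (2 * B * R * (1/2)^k)" .
  qed
  also have "\<dots> = ennreal (\<Sum>k. 2 * B * R * (1/2)^k)"
    using B0 R by (intro suminf_ennreal2) (auto intro: summable_mult summable_geometric)
  also have "\<dots> < \<infinity>" by simp
  finally show ?thesis .
qed

lemma inv_norm_integrable_ball_leb:
  fixes c :: "real^2" and R :: real
  assumes R: "R > 0"
  shows "(\<integral>\<^sup>+x. ennreal (1 / norm (x - c)) * indicator (cball c R) x \<partial>lebesgue) < \<infinity>"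
proof -
  have [measurable]: "cball c R \<in> sets borel" by simp
  have "(\<lambda>x. ennreal (1 / norm (x - c)) * indicator (cball c R) x) \<in> borel_measurable lborel"
    by measurable
  thus ?thesis using inv_norm_integrable_ball[OF R, of c] by (simp add: nn_integral_completion)
qed

lemma potential_integral_bounded:
  fixes S :: "(real^2) set"
  assumes "bounded S" and A: "A \<ge> 0"
  shows "\<exists>M. (\<integral>\<^sup>+x\<in>S. ennreal (potential n p A x) \<partial>lebesgue) \<le> ennreal M"
proof -
  obtain R0 where R0': "R0 > 0" "\<forall>x\<in>S. norm x \<le> R0"
    using assms(1) bounded_pos by auto
  hence R0: "R0 > 0" "S \<subseteq> cball 0 R0" by auto
  define R' where "R' = R0 + (\<Sum>i<n. norm (p i)) + 1"
  have sumnn: "(\<Sum>i<n. norm (p i)) \<ge> 0" by (simp add: sum_nonneg)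
  have R'0: "R' > 0" using R0 sumnn by (simp add: R'_def)
  have inS: "x \<in> cball (p i) R'" if "x \<in> S" "i < n" for x i
  proof -
    have "norm x \<le> R0" using R0 that by auto
    moreover have "norm (p i) \<le> (\<Sum>i<n. norm (p i))"
      using that(2) by (intro member_le_sum) auto
    ultimately show ?thesis unfolding R'_def mem_cball dist_norm
      using norm_triangle_ineq4[of "p i" x] by linarith
  qed
  define g where "g x = ennreal A * indicator (cball 0 R0) x +
      (\<Sum>i<n. ennreal (1 / norm (x - p i)) * indicator (cball (p i) R') x)" for x
  have pt: "ennreal (potential n p A x) * indicator S x \<le> g x" for x
  proof (cases "x \<in> S")
    case True
    have "ennreal (potential n p A x) = ennreal A + ennreal (\<Sum>i<n. 1 / (2 * norm (x - p i)))"
      unfolding potential_def using A by (intro ennreal_plus) (auto intro: sum_nonneg)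
    also have "ennreal (\<Sum>i<n. 1 / (2 * norm (x - p i))) = (\<Sum>i<n. ennreal (1 / (2 * norm (x - p i))))"
      by (rule sum_ennreal[symmetric]) simp
    also have "\<dots> \<le> (\<Sum>i<n. ennreal (1 / norm (x - p i)) * indicator (cball (p i) R') x)"
    proof (rule sum_mono)
      fix i assume "i \<in> {..<n}"
      hence "x \<in> cball (p i) R'" using inS True by auto
      moreover have "1 / (2 * norm (x - p i)) \<le> 1 / norm (x - p i)"
        by (cases "norm (x - p i) = 0") (auto simp: field_simps)
      ultimately show "ennreal (1 / (2 * norm (x - p i))) \<le> ennreal (1 / norm (x - p i)) * indicator (cball (p i) R') x"
        by (simp add: ennreal_leI)
    qed
    finally show ?thesis using True R0 unfolding g_def by (auto intro: add_mono)
  qed (simp add: g_def)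
  have [measurable]: "cball c r \<in> sets borel" for c :: "real^2" and r by simp
  have m1: "(\<lambda>x. ennreal A * indicator (cball (0::real^2) R0) x) \<in> borel_measurable lborel" by measurable
  have m2: "(\<lambda>x. ennreal (1 / norm (x - p i)) * indicator (cball (p i) R') x) \<in> borel_measurable lborel" for i
    by measurable
  have m3: "(\<lambda>x. (\<Sum>i<n. ennreal (1 / norm (x - p i)) * indicator (cball (p i) R') x)) \<in> borel_measurable lborel"
    by measurable
  have gm: "g \<in> borel_measurable lborel" unfolding g_def using m1 m3 by (rule borel_measurable_add)
  define IA where "IA = (\<integral>\<^sup>+x. ennreal A * indicator (cball (0::real^2) R0) x \<partial>lborel)"
  define IS where "IS = (\<integral>\<^sup>+x. (\<Sum>i<n. ennreal (1 / norm (x - p i)) * indicator (cball (p i) R') x) \<partial>lborel)"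
  have le1: "(\<integral>\<^sup>+x\<in>S. ennreal (potential n p A x) \<partial>lebesgue) \<le> integral\<^sup>N lebesgue g"
    by (intro nn_integral_mono pt)
  have eq1: "integral\<^sup>N lebesgue g = integral\<^sup>N lborel g" using gm by (simp add: nn_integral_completion)
  have eq2: "integral\<^sup>N lborel g = IA + IS"
    unfolding g_def[abs_def] IA_def IS_def by (rule nn_integral_add[OF m1 m3])
  have eq3: "IS = (\<Sum>i<n. \<integral>\<^sup>+x. ennreal (1 / norm (x - p i)) * indicator (cball (p i) R') x \<partial>lborel)"
    unfolding IS_def by (rule nn_integral_sum) (rule m2)
  have eq4: "IA = ennreal A * emeasure lborel (cball (0::real^2) R0)"
    unfolding IA_def by (rule nn_integral_cmult_indicator) simp
  have addfin: "\<And>a b::ennreal. a < \<infinity> \<Longrightarrow> b < \<infinity> \<Longrightarrow> a + b < \<infinity>" by simp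
  have "emeasure lborel (cball (0::real^2) R0) < \<infinity>" using R0 by (simp add: emeasure_cball)
  hence fa: "IA < \<infinity>" unfolding eq4 by (simp add: ennreal_mult_less_top)
  have allfin: "\<forall>i\<in>{..<n}. (\<integral>\<^sup>+x. ennreal (1 / norm (x - p i)) * indicator (cball (p i) R') x \<partial>lborel) < \<infinity>"
    using inv_norm_integrable_ball[OF R'0] by blast
  have sumfin: "\<And>f::nat\<Rightarrow>ennreal. \<forall>i\<in>{..<n}. f i < \<infinity> \<Longrightarrow> (\<Sum>i<n. f i) < \<infinity>"
    by simp
  have fs: "IS < \<infinity>" unfolding eq3 by (rule sumfin[OF allfin])
  have "integral\<^sup>N lebesgue g < \<infinity>" unfolding eq1 eq2 by (rule addfin[OF fa fs])
  hence fin: "(\<integral>\<^sup>+x\<in>S. ennreal (potential n p A x) \<partial>lebesgue) < \<infinity>" using le1 by (rule le_less_trans[rotated])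
  define X where "X = (\<integral>\<^sup>+x\<in>S. ennreal (potential n p A x) \<partial>lebesgue)"
  have "X \<noteq> top" using fin unfolding X_def by simp
  hence eX: "ennreal (enn2real X) = X" by (simp add: less_top)
  show ?thesis unfolding X_def[symmetric] by (rule exI[of _ "enn2real X"]) (simp only: eX order_refl)
qed

lemma alexandrov_point:
  fixes Om :: "(real^2) set" and phi :: "real^2 \<Rightarrow> real" and g :: "real^2"
  assumes Om: "open Om" "convex Om" "bounded Om" and uO: "u \<in> Om"
    and cphi: "continuous_on (closure Om) phi"
    and wF: "w \<in> frontier Om" and wd: "dist u w \<le> d" and d0: "d > 0"
    and D0: "D > 0" and diam: "\<forall>z\<in>closure Om. norm (z - u) \<le> D"
    and bd: "\<forall>z\<in>frontier Om. phi z \<ge> c + g \<bullet> z"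
    and meas: "(\<Union>x\<in>Om. subdiff phi Om x) \<in> sets lebesgue"
    and M0: "M \<ge> 0"
    and Mb: "emeasure lebesgue (\<Union>x\<in>Om. subdiff phi Om x) \<le> ennreal M"
  shows "phi u \<ge> c + g \<bullet> u - sqrt (8 * D * M * d)"
proof (rule ccontr)
  assume neg: "\<not> phi u \<ge> c + g \<bullet> u - sqrt (8 * D * M * d)"
  define h where "h = c + g \<bullet> u - phi u"
  have hpos: "h > sqrt (8 * D * M * d)" using neg unfolding h_def by linarith
  have "0 \<le> 8 * D * M * d" using D0 M0 d0 by simp
  hence h0: "h > 0" using hpos real_sqrt_ge_zero[of "8 * D * M * d"] by linarith
  have wnO: "w \<notin> Om" using wF Om(1) by (simp add: frontier_def interior_open)
  obtain a \<beta> where a0: "a \<noteq> 0" and aO: "\<forall>x\<in>Om. a \<bullet> x \<le> \<beta>" and aw: "\<forall>x\<in>{w}. a \<bullet> x \<ge> \<beta>"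
    using separating_hyperplane_sets[of Om "{w}"] Om uO wnO by auto
  define e where "e = a /\<^sub>R norm a"
  have ne: "norm e = 1" using a0 by (simp add: e_def)
  have half: "e \<bullet> (z - u) \<le> d" if "z \<in> closure Om" for z
  proof -
    have "closure Om \<subseteq> {x. a \<bullet> x \<le> \<beta>}"
      using aO by (intro closure_minimal) (auto simp: closed_halfspace_le)
    hence "a \<bullet> z \<le> a \<bullet> w" using that aw by auto
    hence "e \<bullet> z \<le> e \<bullet> w" using a0 by (simp add: e_def divide_right_mono)
    hence "e \<bullet> (z - u) \<le> e \<bullet> (w - u)" by (simp add: inner_diff_right)
    also have "\<dots> \<le> norm e * norm (w - u)" by (rule norm_cauchy_schwarz)
    also have "\<dots> \<le> d" using ne wd by (simp add: dist_norm norm_minus_commute)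
    finally show ?thesis .
  qed
  define r where "r = (vector [- (e$2), e$1] :: real^2)"
  have nr: "norm r = 1" using ne
    by (simp add: r_def norm_eq_sqrt_inner inner_vec_def sum_2 power2_eq_square add.commute)
  define f where "f x = x$1 *\<^sub>R e + x$2 *\<^sub>R r" for x :: "real^2"
  have linf: "linear f" unfolding f_def by (intro linearI) (auto simp: algebra_simps)
  have detf: "det (matrix f) = 1"
  proof -
    have "det (matrix f) = e$1 * r$2 - e$2 * r$1" unfolding f_def by (simp add: det_2 matrix_def axis_def)
    also have "\<dots> = (norm e)^2" by (simp add: r_def norm_eq_sqrt_inner inner_vec_def sum_2 power2_eq_square)
    finally show ?thesis using ne by simp
  qed
  define lo where "lo = (vector [0, - h / (4 * D)] :: real^2)"
  define hi where "hi = (vector [h / (4 * d), h / (4 * D)] :: real^2)"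
  define Q where "Q = (+) g ` (f ` cbox lo hi)"
  have sub: "Q \<subseteq> (\<Union>x\<in>Om. subdiff phi Om x)"
  proof
    fix q0 assume "q0 \<in> Q"
    then obtain y where y: "y \<in> cbox lo hi" and q0: "q0 = g + f y" unfolding Q_def by auto
    define q where "q = f y"
    have y1: "0 \<le> y$1" "y$1 \<le> h / (4 * d)" and y2: "\<bar>y$2\<bar> \<le> h / (4 * D)"
      using y by (auto simp: mem_box_cart forall_2 lo_def hi_def)
    have qb: "q \<bullet> (z - u) < h" if "z \<in> closure Om" for z
    proof -
      have "q \<bullet> (z - u) = y$1 * (e \<bullet> (z - u)) + y$2 * (r \<bullet> (z - u))"
        by (simp add: q_def f_def inner_add_left)
      also have "y$1 * (e \<bullet> (z - u)) \<le> y$1 * d" using half[OF that] y1 by (simp add: mult_left_mono)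
      also have "y$1 * d \<le> h / 4" using y1 d0 by (simp add: field_simps)
      also have "y$2 * (r \<bullet> (z - u)) \<le> \<bar>y$2\<bar> * D"
      proof -
        have "\<bar>r \<bullet> (z - u)\<bar> \<le> norm r * norm (z - u)" by (rule Cauchy_Schwarz_ineq2)
        hence "\<bar>r \<bullet> (z - u)\<bar> \<le> D" using nr diam that by force
        hence "\<bar>y$2 * (r \<bullet> (z - u))\<bar> \<le> \<bar>y$2\<bar> * D" by (simp add: abs_mult mult_left_mono)
        thus ?thesis by linarith
      qed
      also have "\<bar>y$2\<bar> * D \<le> h / 4" using y2 D0 by (simp add: field_simps)
      finally show ?thesis using h0 by linarith
    qed
    have cO: "compact (closure Om)" using Om(3) by (simp add: compact_closure)
    have neO: "closure Om \<noteq> {}" using uO by auto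
    have cW: "continuous_on (closure Om) (\<lambda>z. phi z - (g + q) \<bullet> z)"
      by (intro continuous_intros cphi)
    obtain x where xO: "x \<in> closure Om" and xmin: "\<And>z. z \<in> closure Om \<Longrightarrow> phi x - (g + q) \<bullet> x \<le> phi z - (g + q) \<bullet> z"
      using continuous_attains_inf[OF cO neO cW] by auto
    have "x \<notin> frontier Om"
    proof
      assume xF: "x \<in> frontier Om"
      have "phi x \<ge> c + g \<bullet> x" using bd xF by auto
      moreover have "q \<bullet> (x - u) < h" using qb xO by auto
      moreover have "phi x - (g + q) \<bullet> x \<le> phi u - (g + q) \<bullet> u" using xmin uO closure_subset by auto
      ultimately show False unfolding h_def by (simp add: inner_add_left inner_diff_right)
    qed
    hence xO': "x \<in> Om" using xO Om(1) by (simp add: frontier_def interior_open)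
    have "q0 \<in> subdiff phi Om x"
      unfolding subdiff_def q0 q_def[symmetric]
    proof (intro CollectI ballI)
      fix z assume "z \<in> Om"
      hence "phi x - (g + q) \<bullet> x \<le> phi z - (g + q) \<bullet> z" using xmin closure_subset by auto
      thus "phi z \<ge> phi x + (g + q) \<bullet> (z - x)" by (simp add: inner_diff_right)
    qed
    thus "q0 \<in> (\<Union>x\<in>Om. subdiff phi Om x)" using xO' by auto
  qed
  have lmb: "cbox lo hi \<in> lmeasurable" by simp
  have Qm: "Q \<in> lmeasurable" unfolding Q_def
    by (intro measurable_translation measurable_linear_image[OF linf] lmb)
  have "measure lebesgue Q = measure lebesgue (cbox lo hi)"
    unfolding Q_def measure_translation measure_linear_image[OF linf lmb] detf by simp
  also have "\<dots> = (h / (4 * d)) * (h / (2 * D))"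
  proof -
    have "lo \<in> cbox lo hi" using h0 d0 D0 by (auto simp: mem_box_cart forall_2 lo_def hi_def)
    hence ne: "cbox lo hi \<noteq> {}" by auto
    show ?thesis
      apply (subst measure_completion, simp)
      apply (subst content_cbox_cart[OF ne])
      by (auto simp: UNIV_2 lo_def hi_def)
  qed
  finally have mQ: "measure lebesgue Q = (h / (4 * d)) * (h / (2 * D))" .
  have "ennreal (measure lebesgue Q) = emeasure lebesgue Q"
    using Qm by (simp add: emeasure_eq_measure2)
  also have "\<dots> \<le> emeasure lebesgue (\<Union>x\<in>Om. subdiff phi Om x)"
    by (intro emeasure_mono sub meas)
  also have "\<dots> \<le> ennreal M" by (rule Mb)
  finally have "(h / (4 * d)) * (h / (2 * D)) \<le> M" using M0 mQ by simp
  hence "h^2 \<le> 8 * D * M * d" using d0 D0 by (simp add: field_simps power2_eq_square)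
  hence "sqrt (h^2) \<le> sqrt (8 * D * M * d)" by (rule real_sqrt_le_mono)
  thus False using hpos h0 by simp
qed

lemma emeasure_open_pos:
  fixes Om :: "(real^2) set"
  assumes "open Om" "u \<in> Om"
  shows "emeasure lebesgue Om > 0"
proof -
  obtain r where r: "r > 0" "ball u r \<subseteq> Om" using assms openE by blast
  have "measure lebesgue (ball u r) = measure lborel (ball u r)" by (simp add: measure_completion)
  also have "\<dots> = unit_ball_vol (real DIM(real^2)) * r ^ DIM(real^2)" by (rule content_ball) (use r in simp)
  finally have "measure lebesgue (ball u r) > 0" using r by simp
  hence "emeasure lebesgue (ball u r) > 0" by (metis measure_def enn2real_0 less_irrefl not_gr_zero)
  also have "emeasure lebesgue (ball u r) \<le> emeasure lebesgue Om"
    using r assms by (intro emeasure_mono) auto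
  finally show ?thesis .
qed

lemma potential_pos_integral:
  assumes poly: "ccw_convex_polygon n p" and A: "A \<ge> 0" and Om: "open Om" "u \<in> Om" "bounded Om"
  shows "(\<integral>\<^sup>+x\<in>Om. ennreal (potential n p A x) \<partial>lebesgue) > 0"
proof -
  have n3: "3 \<le> n" using poly by (simp add: ccw_convex_polygon_def)
  have "cross2 (p (Suc 0 mod n) - p 0) (p 2 - p 0) > 0"
    using ccwD[OF poly, of 0 2] n3 by (auto simp: sucmod)
  hence p01: "p 1 \<noteq> p 0" using n3 by (auto simp: sucmod cross2_def)
  obtain R where R: "R > 0" "\<forall>x\<in>Om. norm x \<le> R" using Om(3) bounded_pos by auto
  define R' where "R' = R + norm (p 0) + norm (p 1) + 1"
  have R'0: "R' > 0" using R by (simp add: R'_def add_pos_nonneg)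
  have dist0: "norm (x - p j) \<le> R'" if "x \<in> Om" "j \<in> {0, 1}" for x j
  proof -
    have "norm (x - p j) \<le> norm x + norm (p j)" by (rule norm_triangle_ineq4)
    moreover have nx: "norm x \<le> R" using R(2) that(1) by blast
    ultimately have a: "norm (x - p j) \<le> R + norm (p j)" by linarith
    have b0: "norm (p 0) \<ge> 0" and b1: "norm (p 1) \<ge> 0" by simp_all
    have "j = 0 \<or> j = 1" using that(2) by blast
    thus ?thesis
    proof
      assume j0: "j = 0"
      have "norm (x - p 0) \<le> R + norm (p 0)" using a j0 by simp
      thus ?thesis using b1 unfolding R'_def j0 by linarith
    next
      assume j1: "j = 1"
      have "norm (x - p 1) \<le> R + norm (p 1)" using a j1 by simp
      thus ?thesis using b0 unfolding R'_def j1 by linarith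
    qed
  qed
  define c0 where "c0 = 1 / (2 * R')"
  have c00: "c0 > 0" using R'0 by (simp add: c0_def)
  have lb: "potential n p A x \<ge> c0" if x: "x \<in> Om" for x
  proof -
    obtain j where j: "j \<in> {0, 1}" "x \<noteq> p j" using p01 by (metis insertCI)
    have jn: "j < n" using j n3 by auto
    have "norm (x - p j) > 0" using j by simp
    hence "c0 \<le> 1 / (2 * norm (x - p j))" using dist0[OF x j(1)] R'0 by (simp add: c0_def frac_le)
    also have "\<dots> \<le> (\<Sum>i<n. 1 / (2 * norm (x - p i)))"
      using jn by (intro member_le_sum) auto
    also have "\<dots> \<le> potential n p A x" using A by (simp add: potential_def)
    finally show ?thesis .
  qed
  have "(\<integral>\<^sup>+x\<in>Om. ennreal c0 \<partial>lebesgue) \<le> (\<integral>\<^sup>+x\<in>Om. ennreal (potential n p A x) \<partial>lebesgue)"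
    using lb by (intro nn_integral_mono) (auto simp: indicator_def ennreal_leI)
  moreover have "(\<integral>\<^sup>+x\<in>Om. ennreal c0 \<partial>lebesgue) = ennreal c0 * emeasure lebesgue Om"
    using Om(1) by (intro nn_integral_cmult_indicator) simp
  moreover have "ennreal c0 * emeasure lebesgue Om > 0"
    using c00 emeasure_open_pos[OF Om(1,2)] by (simp add: ennreal_zero_less_mult_iff)
  ultimately show ?thesis by order
qed

theorem mainTheorem4:
  fixes n :: nat and p :: "nat \<Rightarrow> real^2" and A :: real and b :: "nat \<Rightarrow> real"
    and phibar :: "real^2 \<Rightarrow> real" and Ut :: "real \<Rightarrow> (real^2) set"
    and phi :: "real \<Rightarrow> real^2 \<Rightarrow> real"
  assumes poly: "ccw_convex_polygon n p"
    and A: "A \<ge> 0"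
    and bdry: "extends_boundary_data n p b phibar"
    and lip: "\<exists>L. L-lipschitz_on (closure (polygon_interior n p)) phibar"
    and fam: "smooth_expanding_family Ut (polygon_interior n p)"
    and cont: "\<forall>t\<in>{0<..<1}. continuous_on (closure (Ut t)) (phi t)"
    and cvx: "\<forall>t\<in>{0<..<1}. convex_on (closure (Ut t)) (phi t)"
    and MA: "\<forall>t\<in>{0<..<1}. alexandrov_MA (phi t) (potential n p A) (Ut t)"
    and bc: "\<forall>t\<in>{0<..<1}. \<forall>x\<in>frontier (Ut t). phi t x = phibar x"
  shows "\<exists>C. \<forall>t\<in>{0<..<1}. \<forall>u\<in>Ut t.
           phi t u \<ge> phibar u - C * sqrt (infdist u (frontier (polygon_interior n p)))"
proof -
  define U where "U = polygon_interior n p"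
  have famU: "\<forall>t\<in>{0<..<1}. strictly_convex_domain (Ut t) \<and> Ut t \<subseteq> U"
    using fam unfolding smooth_expanding_family_def U_def by blast
  show ?thesis
  proof (cases "U = {}")
    case True
    thus ?thesis using famU by (intro exI[of _ 0]) blast
  next
    case False
    hence ne: "polygon_interior n p \<noteq> {}" by (simp add: U_def)
    obtain L where lipL: "L-lipschitz_on (closure U) phibar" using lip by (auto simp: U_def)
    obtain K where K0: "K \<ge> 0" and Kb: "\<forall>u\<in>U. \<forall>y\<in>frontier U. \<exists>g c.
           (\<forall>z\<in>closure U. c + g \<bullet> z \<le> phibar z) \<and> phibar u - K * norm (u - y) \<le> c + g \<bullet> u"
      using minorant[OF poly ne bdry lipL[unfolded U_def]] unfolding U_def by blast
    define H where "H = convex hull (p ` {..<n})"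
    have clU: "closure U = H" unfolding U_def H_def by (rule hull_eq_closure[OF ne])
    have bH: "bounded H" unfolding H_def by (intro bounded_convex_hull finite_imp_bounded) auto
    obtain R where R: "R > 0" "\<forall>x\<in>H. norm x \<le> R" using bH bounded_pos by auto
    define D0 where "D0 = 2 * R + 1"
    have D00: "D0 > 0" using R by (simp add: D0_def)
    have diamU: "norm (x - y) \<le> D0" if "x \<in> closure U" "y \<in> closure U" for x y
    proof -
      have "norm (x - y) \<le> norm x + norm y" by (rule norm_triangle_ineq4)
      moreover have "norm x \<le> R" "norm y \<le> R" using R that clU by auto
      ultimately show ?thesis unfolding D0_def by linarith
    qed
    have bU: "bounded U" using bH clU closure_subset bounded_subset by metis
    obtain M0 where M0: "(\<integral>\<^sup>+x\<in>U. ennreal (potential n p A x) \<partial>lebesgue) \<le> ennreal M0"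
      using potential_integral_bounded[OF bU A] by blast
    define M where "M = max M0 0"
    have M0': "M \<ge> 0" by (simp add: M_def)
    have MU: "(\<integral>\<^sup>+x\<in>U. ennreal (potential n p A x) \<partial>lebesgue) \<le> ennreal M"
      using M0 by (rule order.trans) (simp add: M_def ennreal_leI)
    have openU: "open U" by (simp add: U_def polygon_interior_def)
    define C where "C = K * sqrt D0 + sqrt (8 * D0 * M)"
    have "phi t u \<ge> phibar u - C * sqrt (infdist u (frontier U))" if t: "t \<in> {0<..<1}" and uO: "u \<in> Ut t" for t u
    proof -
      define Om where "Om = Ut t"
      have scd: "strictly_convex_domain Om" and OmU: "Om \<subseteq> U" using famU t by (auto simp: Om_def)
      have Omo: "open Om" and Omc: "convex Om" using scd by (auto simp: strictly_convex_domain_def)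
      have Omb: "bounded Om" using bU OmU bounded_subset by blast
      have uOm: "u \<in> Om" using uO by (simp add: Om_def)
      have uU: "u \<in> U" using OmU uOm by blast
      have fUc: "closed (frontier U)" by simp
      have fUne: "frontier U \<noteq> {}" using False bU not_bounded_UNIV by (auto simp: frontier_eq_empty)
      obtain y where yF: "y \<in> frontier U" and dy: "infdist u (frontier U) = dist u y"
        using infdist_attains_inf[OF fUc fUne] by blast
      define d where "d = dist u y"
      have yU: "y \<notin> U" using yF openU by (simp add: frontier_def interior_open)
      have d0: "d > 0" using uU yU by (auto simp: d_def)
      have yclU: "y \<in> closure U" using yF by (simp add: frontier_def)
      have uclU: "u \<in> closure U" using uU closure_subset by blast
      have dD: "d \<le> D0" using diamU[OF uclU yclU] by (simp add: d_def dist_norm)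
      obtain w where wS: "w \<in> closed_segment u y" and wF: "w \<in> frontier Om"
      proof -
        have "closed_segment u y \<inter> Om \<noteq> {}" using uOm by auto
        moreover have "closed_segment u y - Om \<noteq> {}" using yU OmU by auto
        ultimately have "closed_segment u y \<inter> frontier Om \<noteq> {}"
          by (intro connected_Int_frontier) auto
        thus ?thesis using that by blast
      qed
      have wd: "dist u w \<le> d" using dist_in_closed_segment[OF wS] by (simp add: d_def dist_commute)
      obtain g c where gbelow: "\<forall>z\<in>closure U. c + g \<bullet> z \<le> phibar z" and gu: "phibar u - K * norm (u - y) \<le> c + g \<bullet> u"
        using Kb uU yF by blast
      have clOm: "closure Om \<subseteq> closure U" using OmU by (rule closure_mono)
      have bd: "\<forall>z\<in>frontier Om. phi t z \<ge> c + g \<bullet> z"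
      proof
        fix z assume zF: "z \<in> frontier Om"
        hence "z \<in> closure U" using clOm by (auto simp: frontier_def)
        hence "c + g \<bullet> z \<le> phibar z" using gbelow by blast
        thus "phi t z \<ge> c + g \<bullet> z" using bc t zF by (simp add: Om_def)
      qed
      have diam: "\<forall>z\<in>closure Om. norm (z - u) \<le> D0" using diamU clOm uclU by blast
      have ma: "emeasure lebesgue (\<Union>x\<in>Om. subdiff (phi t) Om x) = (\<integral>\<^sup>+x\<in>Om. ennreal (potential n p A x) \<partial>lebesgue)"
        using MA t Omo unfolding alexandrov_MA_def Om_def by (simp add: borel_open)
      have pos: "(\<integral>\<^sup>+x\<in>Om. ennreal (potential n p A x) \<partial>lebesgue) > 0"
        by (rule potential_pos_integral[OF poly A Omo uOm Omb])
      have meas: "(\<Union>x\<in>Om. subdiff (phi t) Om x) \<in> sets lebesgue"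
      proof (rule ccontr)
        assume "(\<Union>x\<in>Om. subdiff (phi t) Om x) \<notin> sets lebesgue"
        hence "emeasure lebesgue (\<Union>x\<in>Om. subdiff (phi t) Om x) = 0" by (rule emeasure_notin_sets)
        thus False using ma pos by simp
      qed
      have "(\<integral>\<^sup>+x\<in>Om. ennreal (potential n p A x) \<partial>lebesgue) \<le> (\<integral>\<^sup>+x\<in>U. ennreal (potential n p A x) \<partial>lebesgue)"
        using OmU by (intro nn_integral_mono) (auto simp: indicator_def)
      hence Mb: "emeasure lebesgue (\<Union>x\<in>Om. subdiff (phi t) Om x) \<le> ennreal M" using ma MU by simp
      have contO: "continuous_on (closure Om) (phi t)" using cont t by (simp add: Om_def)
      have al: "phi t u \<ge> c + g \<bullet> u - sqrt (8 * D0 * M * d)"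
        by (rule alexandrov_point[OF Omo Omc Omb uOm contO wF wd d0 D00 diam bd meas M0' Mb])
      have sd: "sqrt d * sqrt d = d" using d0 by simp
      have "K * d \<le> K * sqrt D0 * sqrt d"
      proof -
        have "sqrt d \<le> sqrt D0" using dD by simp
        hence "sqrt d * sqrt d \<le> sqrt D0 * sqrt d" by (rule mult_right_mono) (use d0 in simp)
        hence "d \<le> sqrt D0 * sqrt d" using sd by simp
        thus ?thesis using K0 by (simp add: mult_left_mono mult.assoc)
      qed
      moreover have "sqrt (8 * D0 * M * d) = sqrt (8 * D0 * M) * sqrt d" by (simp add: real_sqrt_mult)
      moreover have "K * norm (u - y) = K * d" by (simp add: d_def dist_norm)
      moreover have "C * sqrt d = K * sqrt D0 * sqrt d + sqrt (8 * D0 * M) * sqrt d" by (simp add: C_def algebra_simps)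
      ultimately have "phi t u \<ge> phibar u - C * sqrt d" using al gu by linarith
      thus ?thesis using dy by (simp add: d_def)
    qed
    thus ?thesis unfolding U_def by blast
  qed
qed

end
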